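(* Let $\mathcal{V}$ be the list of vectors produced by the first reduction (described in the context) from an instance of the (3,2-2) Set Splitting Problem with variables $x(1),\dots,x(n)$ and sets $S_1,\dots,S_m$. Let $z(i,h) \in \{\pm1\}$ for $1 \le i \le n$, $1 \le h \le 4$, and $w(j,h) \in \{\pm 1\}$ for $j \in B$, $1 \le h \le 3$. If there are $k$ indices $i$ for which $z(i,h)$ is not constant in $h$, then the matrix $M(\mathcal{V}, z, w)$ has at least $k$ diagonal entries, in rows/columns indexed by $B$, of absolute value at least $1/50$.
   Context: An instance of the (3,2-2) Set Splitting Problem consists of $\pm1$ variables $x(1),\dots,x(n)$ and sets $S_1,\dots,S_m \subseteq \{1,\dots,n\}$ each of size exactly 4, with each variable in at most 3 sets; $x$ satisfies $S_j$ if $\sum_{i\in S_j} x(i) = 0$. Let $q_1 = \tfrac15 (1,4,-2,-2)^T$, $q_2 = \tfrac15(4,1,2,2)^T$, $q_3 = \tfrac15(-2,2,-1,4)^T$, $q_4 = \tfrac15(-2,2,4,-1)^T$ (an orthonormal basis of $\mathbb{R}^4$). The first reduction: for each $i$ let $A_i = \{ j : i \in S_j\}$; if $|A_i| = t$ (so $t\le 3$), introduce a set $B_i$ of $4 - t$ new coordinates (so $B_i \neq \emptyset$). Let $A = \{1,\dots,m\}$, $B = \bigcup_i B_i$ (disjoint union of new coordinates), and work in $\mathbb{R}^{A \cup B}$. Let $T_i = A_i \cup B_i$ (a set of 4 coordinates) and fix a bijection of $T_i$ with $\{1,2,3,4\}$. For $1\le h\le 4$, $q_{i,h}$ is the vector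 that is zero outside $T_i$ and equals $\tfrac12 q_h$ on $T_i$ (via the bijection). For each $j \in B$ and $1 \le h \le 3$ let $r_{j,h} = \tfrac12 e_j$. $\mathcal{V}$ is the list of all $q_{i,h}$ and $r_{j,h}$. For signs $z(i,h)$, $w(j,h)$, set $M(\mathcal{V}, z, w) = \sum_{i,h} z(i,h) q_{i,h} q_{i,h}^T + \sum_{j \in B, h} w(j,h) r_{j,h} r_{j,h}^T$. *)

theory Defs
  imports Main "HOL.Real"
begin

text \<open>The orthonormal basis q_1..q_4 of R^4 (indices h, p in 1..4): qbase h p = (q_h)_p.\<close>
definition qbase :: "nat \<Rightarrow> nat \<Rightarrow> real" where
  "qbase h p = (if h = 1 then [1, 4, -2, -2] ! (p - 1)
               else if h = 2 then [4, 1, 2, 2] ! (p - 1)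
               else if h = 3 then [-2, 2, -1, 4] ! (p - 1)
               else [-2, 2, 4, -1] ! (p - 1)) / 5"

definition ssp_instance :: "nat \<Rightarrow> nat \<Rightarrow> (nat \<Rightarrow> nat set) \<Rightarrow> bool" where
  "ssp_instance n m S \<longleftrightarrow>
     (\<forall>j\<in>{1..m}. S j \<subseteq> {1..n} \<and> card (S j) = 4) \<and>
     (\<forall>i\<in>{1..n}. card {j\<in>{1..m}. i \<in> S j} \<le> 3)"

text \<open>Coordinates: Inl j for j in A = {1..m}; Inr (i,l) are the new coordinates of B_i.\<close>
type_synonym coord = "nat + nat \<times> nat"

definition Aset :: "nat \<Rightarrow> (nat \<Rightarrow> nat set) \<Rightarrow> nat \<Rightarrow> nat set" where
  "Aset m S i = {j\<in>{1..m}. i \<in> S j}"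

definition Bset :: "nat \<Rightarrow> (nat \<Rightarrow> nat set) \<Rightarrow> nat \<Rightarrow> coord set" where
  "Bset m S i = {Inr (i, l) | l. l < 4 - card (Aset m S i)}"

definition Bcoords :: "nat \<Rightarrow> nat \<Rightarrow> (nat \<Rightarrow> nat set) \<Rightarrow> coord set" where
  "Bcoords n m S = (\<Union>i\<in>{1..n}. Bset m S i)"

definition Tset :: "nat \<Rightarrow> (nat \<Rightarrow> nat set) \<Rightarrow> nat \<Rightarrow> coord set" where
  "Tset m S i = Inl ` Aset m S i \<union> Bset m S i"

definition qvec :: "nat \<Rightarrow> (nat \<Rightarrow> nat set) \<Rightarrow> (nat \<Rightarrow> coord \<Rightarrow> nat) \<Rightarrow> nat \<Rightarrow> nat \<Rightarrow> coord \<Rightarrow> real" where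
  "qvec m S \<sigma> i h c = (if c \<in> Tset m S i then qbase h (\<sigma> i c) / 2 else 0)"

definition rvec :: "coord \<Rightarrow> coord \<Rightarrow> real" where
  "rvec j c = (if c = j then 1 / 2 else 0)"

definition Mmat :: "nat \<Rightarrow> nat \<Rightarrow> (nat \<Rightarrow> nat set) \<Rightarrow> (nat \<Rightarrow> coord \<Rightarrow> nat)
    \<Rightarrow> (nat \<Rightarrow> nat \<Rightarrow> real) \<Rightarrow> (coord \<Rightarrow> nat \<Rightarrow> real) \<Rightarrow> coord \<Rightarrow> coord \<Rightarrow> real" where
  "Mmat n m S \<sigma> z w c d =
     (\<Sum>i\<in>{1..n}. \<Sum>h\<in>{1..4}. z i h * qvec m S \<sigma> i h c * qvec m S \<sigma> i h d)
   + (\<Sum>j\<in>Bcoords n m S. \<Sum>h\<in>{1..3}. w j h * rvec j c * rvec j d)"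

end

theory Submission
  imports Defs
begin

lemma qv: "qbase 1 1 = 1/5" "qbase 1 2 = 4/5" "qbase 1 3 = -2/5" "qbase 1 4 = -2/5"
  "qbase 2 1 = 4/5" "qbase 2 2 = 1/5" "qbase 2 3 = 2/5" "qbase 2 4 = 2/5"
  "qbase 3 1 = -2/5" "qbase 3 2 = 2/5" "qbase 3 3 = -1/5" "qbase 3 4 = 4/5"
  "qbase 4 1 = -2/5" "qbase 4 2 = 2/5" "qbase 4 3 = 4/5" "qbase 4 4 = -1/5"
  by (simp_all add: qbase_def)

lemma key1:
  fixes a b c d e f g :: real
  assumes "a = -1 \<or> a = 1" "b = -1 \<or> b = 1" "c = -1 \<or> c = 1" "d = -1 \<or> d = 1" "e = -1 \<or> e = 1" "f = -1 \<or> f = 1" "g = -1 \<or> g = 1"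
    and "\<not>(a=b \<and> b=c \<and> c=d)"
  shows "\<bar>a + b*16 + c*4 + d*4 + (e+f+g)*25\<bar> \<ge> 2"
  using assms by (elim disjE) simp_all

lemma key:
  fixes a b c d e f g :: real
  assumes "a \<in> {-1,1}" "b \<in> {-1,1}" "c \<in> {-1,1}" "d \<in> {-1,1}" "e \<in> {-1,1}" "f \<in> {-1,1}" "g \<in> {-1,1}"
    and nc: "\<not>(a=b \<and> b=c \<and> c=d)" and "p \<in> {1..4::nat}"
  shows "\<bar>(a*(qbase 1 p/2)^2 + b*(qbase 2 p/2)^2 + c*(qbase 3 p/2)^2 + d*(qbase 4 p/2)^2) + (e+f+g)/4\<bar> \<ge> 1/50"
proof -
  have s: "a = -1 \<or> a = 1" "b = -1 \<or> b = 1" "c = -1 \<or> c = 1" "d = -1 \<or> d = 1" "e = -1 \<or> e = 1" "f = -1 \<or> f = 1" "g = -1 \<or> g = 1"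
    using assms(1-7) by auto
  have gen: "\<And>X::real. 2 \<le> \<bar>X\<bar> \<Longrightarrow> 1/50 \<le> \<bar>X/100\<bar>" by simp
  have "p = 1 \<or> p = 2 \<or> p = 3 \<or> p = 4" using assms(9) by auto
  then consider "p=1" | "p=2" | "p=3" | "p=4" by blast
  then show ?thesis
  proof cases
    case 1
    have "(a*(qbase 1 p/2)^2 + b*(qbase 2 p/2)^2 + c*(qbase 3 p/2)^2 + d*(qbase 4 p/2)^2) + (e+f+g)/4
       = (a + b*16 + c*4 + d*4 + (e+f+g)*25) / 100" unfolding 1 qv by (simp add: field_simps power2_eq_square)
    moreover have "\<bar>a + b*16 + c*4 + d*4 + (e+f+g)*25\<bar> \<ge> 2" using key1[OF s nc] .
    ultimately show ?thesis using gen by metis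
  next
    case 2
    have "(a*(qbase 1 p/2)^2 + b*(qbase 2 p/2)^2 + c*(qbase 3 p/2)^2 + d*(qbase 4 p/2)^2) + (e+f+g)/4
       = (b + a*16 + c*4 + d*4 + (e+f+g)*25) / 100" unfolding 2 qv by (simp add: field_simps power2_eq_square)
    moreover have "\<bar>b + a*16 + c*4 + d*4 + (e+f+g)*25\<bar> \<ge> 2"
      by (rule key1) (use s nc in auto)
    ultimately show ?thesis using gen by metis
  next
    case 3
    have "(a*(qbase 1 p/2)^2 + b*(qbase 2 p/2)^2 + c*(qbase 3 p/2)^2 + d*(qbase 4 p/2)^2) + (e+f+g)/4
       = (c + d*16 + a*4 + b*4 + (e+f+g)*25) / 100" unfolding 3 qv by (simp add: field_simps power2_eq_square)
    moreover have "\<bar>c + d*16 + a*4 + b*4 + (e+f+g)*25\<bar> \<ge> 2"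
      by (rule key1) (use s nc in auto)
    ultimately show ?thesis using gen by metis
  next
    case 4
    have "(a*(qbase 1 p/2)^2 + b*(qbase 2 p/2)^2 + c*(qbase 3 p/2)^2 + d*(qbase 4 p/2)^2) + (e+f+g)/4
       = (d + c*16 + a*4 + b*4 + (e+f+g)*25) / 100" unfolding 4 qv by (simp add: field_simps power2_eq_square)
    moreover have "\<bar>d + c*16 + a*4 + b*4 + (e+f+g)*25\<bar> \<ge> 2"
      by (rule key1) (use s nc in auto)
    ultimately show ?thesis using gen by metis
  qed
qed
lemma four: "{1..4::nat} = {1,2,3,4}" by auto
lemma three: "{1..3::nat} = {1,2,3}" by auto

theorem lemma8:
  fixes n m k :: nat and S :: "nat \<Rightarrow> nat set" and \<sigma> :: "nat \<Rightarrow> coord \<Rightarrow> nat"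
    and z :: "nat \<Rightarrow> nat \<Rightarrow> real" and w :: "coord \<Rightarrow> nat \<Rightarrow> real"
  assumes inst: "ssp_instance n m S"
    and bij: "\<forall>i\<in>{1..n}. bij_betw (\<sigma> i) (Tset m S i) {1..4}"
    and zsign: "\<forall>i\<in>{1..n}. \<forall>h\<in>{1..4}. z i h \<in> {-1, 1}"
    and wsign: "\<forall>j\<in>Bcoords n m S. \<forall>h\<in>{1..3}. w j h \<in> {-1, 1}"
    and kdef: "k = card {i\<in>{1..n}. \<exists>h\<in>{1..4}. \<exists>h'\<in>{1..4}. z i h \<noteq> z i h'}"
  shows "k \<le> card {j\<in>Bcoords n m S. \<bar>Mmat n m S \<sigma> z w j j\<bar> \<ge> 1 / 50}"
proof -
  let ?K = "{i\<in>{1..n}. \<exists>h\<in>{1..4}. \<exists>h'\<in>{1..4}. z i h \<noteq> z i h'}"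
  let ?T = "{j\<in>Bcoords n m S. \<bar>Mmat n m S \<sigma> z w j j\<bar> \<ge> 1 / 50}"
  have finB: "finite (Bset m S i)" for i
  proof -
    have "Bset m S i \<subseteq> (\<lambda>l. Inr (i,l)) ` {..<4}" unfolding Bset_def by auto
    then show ?thesis using finite_subset by blast
  qed
  have finBc: "finite (Bcoords n m S)" unfolding Bcoords_def using finB by auto
  have inB: "Inr (i,0) \<in> Bset m S i" if "i \<in> {1..n}" for i
  proof -
    have "card (Aset m S i) \<le> 3" using inst that unfolding ssp_instance_def Aset_def by auto
    then show ?thesis unfolding Bset_def by auto
  qed
  have inBc: "Inr (i,0) \<in> Bcoords n m S" if "i \<in> {1..n}" for i
    using inB[OF that] that unfolding Bcoords_def by blast
  have main: "\<bar>Mmat n m S \<sigma> z w (Inr (i,0)) (Inr (i,0))\<bar> \<ge> 1/50" if iK: "i \<in> ?K" for i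
  proof -
    define j where "j = (Inr (i,0) :: coord)"
    have i1: "i \<in> {1..n}" using iK by auto
    have jT: "j \<in> Tset m S i" using inB[OF i1] unfolding Tset_def j_def by auto
    define p where "p = \<sigma> i j"
    have p: "p \<in> {1..4}" using bij i1 jT unfolding p_def by (meson bij_betw_apply)
    have jT': "j \<notin> Tset m S i'" if "i' \<noteq> i" for i'
      using that unfolding Tset_def Bset_def j_def by auto
    have s1: "(\<Sum>i'\<in>{1..n}. \<Sum>h\<in>{1..4}. z i' h * qvec m S \<sigma> i' h j * qvec m S \<sigma> i' h j)
        = (\<Sum>h\<in>{1..4}. z i h * qvec m S \<sigma> i h j * qvec m S \<sigma> i h j)"
    proof -
      have "(\<Sum>i'\<in>{1..n}. \<Sum>h\<in>{1..4}. z i' h * qvec m S \<sigma> i' h j * qvec m S \<sigma> i' h j)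
         = (\<Sum>h\<in>{1..4}. z i h * qvec m S \<sigma> i h j * qvec m S \<sigma> i h j)
          + (\<Sum>i'\<in>{1..n}-{i}. \<Sum>h\<in>{1..4}. z i' h * qvec m S \<sigma> i' h j * qvec m S \<sigma> i' h j)"
        by (rule sum.remove) (use i1 in auto)
      moreover have "(\<Sum>i'\<in>{1..n}-{i}. \<Sum>h\<in>{1..4}. z i' h * qvec m S \<sigma> i' h j * qvec m S \<sigma> i' h j) = 0"
        by (rule sum.neutral) (auto simp: qvec_def jT')
      ultimately show ?thesis by simp
    qed
    have s2: "(\<Sum>j'\<in>Bcoords n m S. \<Sum>h\<in>{1..3}. w j' h * rvec j' j * rvec j' j)
        = (\<Sum>h\<in>{1..3}. w j h * rvec j j * rvec j j)"
    proof -
      have jB: "j \<in> Bcoords n m S" using inBc[OF i1] j_def by simp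
      have "(\<Sum>j'\<in>Bcoords n m S. \<Sum>h\<in>{1..3}. w j' h * rvec j' j * rvec j' j)
         = (\<Sum>h\<in>{1..3}. w j h * rvec j j * rvec j j)
          + (\<Sum>j'\<in>Bcoords n m S-{j}. \<Sum>h\<in>{1..3}. w j' h * rvec j' j * rvec j' j)"
        by (rule sum.remove) (use jB finBc in auto)
      moreover have "(\<Sum>j'\<in>Bcoords n m S-{j}. \<Sum>h\<in>{1..3}. w j' h * rvec j' j * rvec j' j) = 0"
        by (rule sum.neutral) (auto simp: rvec_def)
      ultimately show ?thesis by simp
    qed
    have jB: "j \<in> Bcoords n m S" using inBc[OF i1] j_def by simp
    have M: "Mmat n m S \<sigma> z w j j = (z i 1*(qbase 1 p/2)^2 + z i 2*(qbase 2 p/2)^2 + z i 3*(qbase 3 p/2)^2 + z i 4*(qbase 4 p/2)^2) + (w j 1 + w j 2 + w j 3)/4"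
      unfolding Mmat_def s1 s2 apply (simp only: four three) by (simp add: qvec_def jT rvec_def p_def power2_eq_square algebra_simps)
    have zs: "z i h \<in> {-1,1}" if "h \<in> {1..4}" for h using zsign i1 that by blast
    have ws: "w j h \<in> {-1,1}" if "h \<in> {1..3}" for h using wsign jB that by blast
    have nc: "\<not>(z i 1 = z i 2 \<and> z i 2 = z i 3 \<and> z i 3 = z i 4)"
    proof
      assume "z i 1 = z i 2 \<and> z i 2 = z i 3 \<and> z i 3 = z i 4"
      then have "\<forall>h\<in>{1..4}. z i h = z i 1" unfolding four by auto
      note A = this
      from iK obtain h h' where "h \<in> {1..4}" "h' \<in> {1..4}" "z i h \<noteq> z i h'" by blast
      then show False using A by metis
    qed
    show ?thesis unfolding j_def[symmetric] M
      by (rule key[OF zs[of 1] zs[of 2] zs[of 3] zs[of 4] ws[of 1] ws[of 2] ws[of 3] nc p]) auto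
  qed
  have "k \<le> card ?T"
    unfolding kdef
  proof (rule card_inj_on_le[where f = "\<lambda>i. Inr (i,0)"])
    show "inj_on (\<lambda>i. Inr (i,0) :: coord) ?K" by (auto simp: inj_on_def)
    show "(\<lambda>i. Inr (i,0)) ` ?K \<subseteq> ?T" using main inBc by auto
    show "finite ?T" using finBc by auto
  qed
  then show ?thesis .
qed
end
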